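(* Let $\mathscr X$, $\widehat x$, $x^*$ and $\omega$ be as in the context. Then: (a) $\displaystyle\limsup_{h\downarrow0}\max_{0\le t\le 1-h}\frac{|\widehat x(t+h)-\widehat x(t)|}{\omega(h)}=1$. (b) $\displaystyle\limsup_{h\downarrow0}\sup_{x\in\mathscr X}\max_{0\le t\le 1-h}\frac{|x(t+h)-x(t)|}{\omega(h)}=\sqrt2$, and moreover $\displaystyle\limsup_{h\downarrow0}\max_{0\le t\le 1-h}\frac{|x^*(t+h)-x^*(t)|}{\omega(h)}=\sqrt2$.
   Context: The Faber--Schauder functions are $e_{0,0}(t):=(\min\{t,1-t\})^+$ and $e_{m,k}(t):=2^{-m/2}e_{0,0}(2^m t-k)$ for $t\in\mathbb R$, $m\ge1$, $k\in\mathbb Z$. $\mathscr X$ denotes the set of all functions $x\in C[0,1]$ of the form $x=\sum_{m=0}^\infty\sum_{k=0}^{2^m-1}\theta_{m,k}e_{m,k}$ (uniformly convergent series) with $\theta_{m,k}\in\{-1,+1\}$. Define $\widehat x:=\sum_{m=0}^\infty\sum_{k=0}^{2^m-1}e_{m,k}$ and $x^*:=e_{0,0}+\sum_{m=1}^\infty\Big(\sum_{k=0}^{2^{m-1}-1}e_{m,k}-\sum_{\ell=2^{m-1}}^{2^m-1}e_{m,\ell}\Big)$. For $h>0$ let $\nu(h):=\lfloor-\log_2 h\rfloor$ and $\omega(h):=\big(1+\frac1{\sqrt2}\big)h2^{\nu(h)/2}+\frac13(\sqrt8+2)2^{-\nu(h)/2}$. *)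

theory Defs
  imports "HOL-Analysis.Analysis"
begin

definition fs_e00 :: "real \<Rightarrow> real" where
  "fs_e00 t = max (min t (1 - t)) 0"

definition fs_e :: "nat \<Rightarrow> int \<Rightarrow> real \<Rightarrow> real" where
  "fs_e m k t = 2 powr (- real m / 2) * fs_e00 (2 ^ m * t - real_of_int k)"

definition fs_level :: "(nat \<Rightarrow> nat \<Rightarrow> real) \<Rightarrow> nat \<Rightarrow> real \<Rightarrow> real" where
  "fs_level \<theta> m t = (\<Sum>k<2 ^ m. \<theta> m k * fs_e m (int k) t)"

definition fs_series :: "(nat \<Rightarrow> nat \<Rightarrow> real) \<Rightarrow> real \<Rightarrow> real" where
  "fs_series \<theta> t = (\<Sum>m. fs_level \<theta> m t)"

definition fs_X :: "(real \<Rightarrow> real) set" where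
  "fs_X = {x. \<exists>\<theta>. (\<forall>m k. \<theta> m k = 1 \<or> \<theta> m k = -1)
              \<and> uniform_limit {0..1} (\<lambda>n t. \<Sum>m<n. fs_level \<theta> m t) x sequentially
              \<and> x = fs_series \<theta>}"

definition x_hat :: "real \<Rightarrow> real" where
  "x_hat = fs_series (\<lambda>m k. 1)"

definition x_star :: "real \<Rightarrow> real" where
  "x_star = fs_series (\<lambda>m k. if m = 0 then 1 else if k < 2 ^ (m - 1) then 1 else -1)"

definition fs_nu :: "real \<Rightarrow> int" where
  "fs_nu h = \<lfloor>- log 2 h\<rfloor>"

definition fs_omega :: "real \<Rightarrow> real" where
  "fs_omega h = (1 + 1 / sqrt 2) * h * 2 powr (real_of_int (fs_nu h) / 2)
               + 1 / 3 * (sqrt 8 + 2) * 2 powr (- real_of_int (fs_nu h) / 2)"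

text \<open>max over 0 \<le> t \<le> 1-h of |x(t+h)-x(t)|/omega(h), taken in ereal (a supremum,
  equal to the maximum by continuity).\<close>
definition fs_mod :: "(real \<Rightarrow> real) \<Rightarrow> real \<Rightarrow> ereal" where
  "fs_mod x h = (SUP t\<in>{0..1-h}. ereal (\<bar>x (t + h) - x t\<bar> / fs_omega h))"

end

theory Submission
  imports Defs
begin

definition phi :: "real \<Rightarrow> real" where "phi v = fs_e00 (frac v)"

lemma e00_simp: "0 \<le> y \<Longrightarrow> y \<le> 1 \<Longrightarrow> fs_e00 y = min y (1 - y)"
  by (simp add: fs_e00_def)
lemma e00_zero: "y \<le> 0 \<or> 1 \<le> y \<Longrightarrow> fs_e00 y = 0"
  by (auto simp: fs_e00_def)
lemma e00_nonneg: "0 \<le> fs_e00 y" by (simp add: fs_e00_def)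

lemma phi_eq: "phi v = min (frac v) (1 - frac v)"
  unfolding phi_def by (rule e00_simp) (auto simp: frac_lt_1 less_imp_le)

lemma phi_le_dist: "phi v \<le> \<bar>v - of_int k\<bar>"
proof -
  have f: "frac v = v - of_int \<lfloor>v\<rfloor>" by (simp add: frac_def)
  show ?thesis
  proof (cases "k \<le> \<lfloor>v\<rfloor>")
    case True
    then have "of_int k \<le> v" by (meson floor_le_iff order.refl le_floor_iff order_trans) 
    thus ?thesis using True unfolding phi_eq f
      by (smt (verit) of_int_le_iff)
  next
    case False
    then have "k \<ge> \<lfloor>v\<rfloor> + 1" by simp
    then have "real_of_int k \<ge> of_int \<lfloor>v\<rfloor> + 1" by linarith
    thus ?thesis unfolding phi_eq f by (smt (verit) of_int_floor_le)
  qed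
qed

lemma phi_attained: "\<exists>k. phi v = \<bar>v - of_int k\<bar>"
proof -
  have f: "frac v = v - of_int \<lfloor>v\<rfloor>" by (simp add: frac_def)
  have "0 \<le> frac v" "frac v < 1" by (auto simp: frac_lt_1)
  show ?thesis
  proof (cases "frac v \<le> 1 - frac v")
    case True
    thus ?thesis unfolding phi_eq using \<open>0 \<le> frac v\<close>
      by (intro exI[of _ "\<lfloor>v\<rfloor>"]) (simp add: f)
  next
    case False
    thus ?thesis unfolding phi_eq using \<open>frac v < 1\<close>
      by (intro exI[of _ "\<lfloor>v\<rfloor>+1"]) (simp add: f)
  qed
qed

lemma phi_nonneg: "0 \<le> phi v" by (simp add: phi_def e00_nonneg)
lemma phi_le_half: "phi v \<le> 1/2" unfolding phi_eq by linarith

lemma phi_lip: "\<bar>phi a - phi b\<bar> \<le> \<bar>a - b\<bar>"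
proof -
  obtain ka where ka: "phi a = \<bar>a - of_int ka\<bar>" using phi_attained by blast
  obtain kb where kb: "phi b = \<bar>b - of_int kb\<bar>" using phi_attained by blast
  have "phi a \<le> \<bar>a - of_int kb\<bar>" by (rule phi_le_dist)
  moreover have "phi b \<le> \<bar>b - of_int ka\<bar>" by (rule phi_le_dist)
  ultimately show ?thesis using ka kb by linarith
qed

lemma phi_shift: "phi (v + of_int k) = phi v"
proof -
  obtain a where a: "phi v = \<bar>v - of_int a\<bar>" using phi_attained by blast
  obtain b where b: "phi (v + of_int k) = \<bar>v + of_int k - of_int b\<bar>" using phi_attained by blast
  have "phi (v + of_int k) \<le> \<bar>v + of_int k - of_int (a + k)\<bar>" by (rule phi_le_dist)
  moreover have "phi v \<le> \<bar>v - of_int (b - k)\<bar>" by (rule phi_le_dist)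
  ultimately show ?thesis using a b by simp
qed

lemma phi_shift_nat: "phi (v + of_nat k) = phi v"
  using phi_shift[of v "int k"] by simp

lemma phi_minus: "phi (- v) = phi v"
proof -
  obtain a where a: "phi v = \<bar>v - of_int a\<bar>" using phi_attained by blast
  obtain b where b: "phi (-v) = \<bar>-v - of_int b\<bar>" using phi_attained by blast
  have "phi (-v) \<le> \<bar>-v - of_int (-a)\<bar>" by (rule phi_le_dist)
  moreover have "phi v \<le> \<bar>v - of_int (-b)\<bar>" by (rule phi_le_dist)
  ultimately show ?thesis using a b by simp
qed

lemma phi_small: "0 \<le> v \<Longrightarrow> v \<le> 1/2 \<Longrightarrow> phi v = v"
proof -
  assume "0 \<le> v" "v \<le> 1/2"
  then have "phi v \<le> \<bar>v - of_int 0\<bar>" by (intro phi_le_dist)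
  moreover obtain k where k: "phi v = \<bar>v - of_int k\<bar>" using phi_attained by blast
  moreover have "real_of_int k \<le> 0 \<or> real_of_int k \<ge> 1" by (cases "k \<le> 0") auto
  ultimately show ?thesis using \<open>0 \<le> v\<close> \<open>v \<le> 1/2\<close> by auto
qed

lemma phi_double: "1/4 \<le> phi v \<Longrightarrow> phi (2 * v) = 1 - 2 * phi v"
proof -
  assume h: "1/4 \<le> phi v"
  obtain k where k: "phi v = \<bar>v - of_int k\<bar>" using phi_attained by blast
  have ph: "phi v \<le> 1/2" by (rule phi_le_half)
  have "phi (2 * v) = phi (2 * (v - of_int k))"
    using phi_shift[of "2 * (v - of_int k)" "2*k"] by (simp add: algebra_simps)
  also have "\<dots> = phi (2 * phi v)"
  proof (cases "v - of_int k \<ge> 0")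
    case True
    then have "2 * (v - of_int k) = 2 * phi v" using k by simp
    then show ?thesis by simp
  next
    case False
    then have "2 * (v - of_int k) = - (2 * phi v)" using k by simp
    then show ?thesis using phi_minus by simp
  qed
  also have "\<dots> = phi (2 * phi v - 1)" using phi_shift[of "2 * phi v - 1" 1] by simp
  also have "\<dots> = phi (1 - 2 * phi v)" using phi_minus[of "1 - 2 * phi v"] by simp
  also have "\<dots> = 1 - 2 * phi v" using h ph by (intro phi_small) auto
  finally show ?thesis .
qed

lemma phi_01: "0 \<le> v \<Longrightarrow> v \<le> 1 \<Longrightarrow> phi v = fs_e00 v"
proof -
  assume "0 \<le> v" "v \<le> 1"
  show ?thesis
  proof (cases "v = 1")
    case True then show ?thesis using phi_shift[of 0 1] phi_small[of 0] by (simp add: fs_e00_def)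
  next
    case False
    then have "frac v = v" using \<open>0 \<le> v\<close> \<open>v \<le> 1\<close> by (simp add: frac_eq)
    then show ?thesis by (simp add: phi_def)
  qed
qed

definition qq :: real where "qq = 1 / sqrt 2"
definition KK :: real where "KK = (2 + sqrt 2) / 3"
definition BB :: real where "BB = (2 * sqrt 2 + 2) / 3"

lemma s2sq: "sqrt 2 * sqrt 2 = (2::real)" by simp
lemma s2_bounds: "1.414 < sqrt (2::real)" "sqrt (2::real) < 1.41422"
proof -
  show "1.414 < sqrt (2::real)" by (rule real_less_rsqrt) (simp add: power2_eq_square)
  have "sqrt (2::real) < sqrt (1.41422^2)" by (rule real_sqrt_less_mono) (simp add: power2_eq_square)
  then show "sqrt (2::real) < 1.41422" by simp
qed

lemma qq_pos: "0 < qq" by (simp add: qq_def)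
lemma qq_s2: "qq * sqrt 2 = 1" by (simp add: qq_def)
lemma qq_sq: "qq * qq = 1/2" by (simp add: qq_def)
lemma qq_bounds: "0.7071 < qq" "qq < 0.70722"
proof -
  have p: "0 < sqrt (2::real)" by simp
  show "0.7071 < qq" unfolding qq_def using s2_bounds p by (simp add: less_divide_eq)
  show "qq < 0.70722" unfolding qq_def using s2_bounds p by (simp add: divide_less_eq)
qed
lemma qq_lt1: "qq < 1" using qq_bounds by simp
lemma sqrt8: "sqrt 8 = 2 * sqrt (2::real)"
proof -
  have "sqrt (8::real) = sqrt (4 * 2)" by simp
  also have "\<dots> = 2 * sqrt 2" by (simp only: real_sqrt_mult) simp
  finally show ?thesis .
qed

lemma qq_alt: "qq = sqrt 2 / 2"
  unfolding qq_def by (simp add: field_simps)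

lemma KK_eq: "KK * (1 - qq) = 1/3"
proof -
  have "KK * (1 - qq) = (2 + sqrt 2 - sqrt 2 - sqrt 2 * sqrt 2 / 2) / 3"
    unfolding KK_def qq_alt by (simp add: algebra_simps)
  also have "\<dots> = 1/3" by simp
  finally show ?thesis .
qed

lemma summable_qq: "summable (\<lambda>j. qq ^ j)"
  using qq_pos qq_lt1 by (intro summable_geometric) simp

lemma summable_P: "summable (\<lambda>j. qq ^ j * phi (2 ^ j * v))"
proof (rule summable_comparison_test[OF _ summable_qq])
  show "\<exists>N. \<forall>n\<ge>N. norm (qq ^ n * phi (2 ^ n * v)) \<le> qq ^ n"
  proof (intro exI[of _ 0] allI impI)
    fix n :: nat
    have "0 \<le> phi (2 ^ n * v)" "phi (2 ^ n * v) \<le> 1" using phi_nonneg phi_le_half[of "2 ^ n * v"] by auto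
    then show "norm (qq ^ n * phi (2 ^ n * v)) \<le> qq ^ n" using qq_pos
      by (simp add: abs_mult mult_left_le)
  qed
qed

definition PP :: "real \<Rightarrow> real" where "PP v = (\<Sum>j. qq ^ j * phi (2 ^ j * v))"

lemma PP_nonneg: "0 \<le> PP v"
  unfolding PP_def using qq_pos phi_nonneg
  by (intro suminf_nonneg[OF summable_P]) simp

lemma PP_rec: "PP v = phi v + qq * PP (2 * v)"
proof -
  have "(\<Sum>j. qq ^ Suc j * phi (2 ^ Suc j * v)) = PP v - qq ^ 0 * phi (2 ^ 0 * v)"
    unfolding PP_def by (rule suminf_split_head[OF summable_P])
  moreover have "(\<Sum>j. qq ^ Suc j * phi (2 ^ Suc j * v)) = qq * PP (2 * v)"
    unfolding PP_def using suminf_mult[OF summable_P, of qq "2 * v"]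
    by (simp add: mult.assoc mult.left_commute)
  ultimately show ?thesis by simp
qed

lemma PP_split: "PP v = (\<Sum>j<n. qq ^ j * phi (2 ^ j * v)) + qq ^ n * PP (2 ^ n * v)"
proof (induction n)
  case 0 then show ?case by simp
next
  case (Suc n)
  have "qq ^ n * PP (2 ^ n * v) = qq ^ n * phi (2 ^ n * v) + qq ^ Suc n * PP (2 ^ Suc n * v)"
    using PP_rec[of "2 ^ n * v"] by (simp add: algebra_simps)
  then show ?case using Suc by simp
qed

lemma PP_shift: "PP (v + of_int k) = PP v"
proof -
  have "phi (2 ^ j * (v + of_int k)) = phi (2 ^ j * v)" for j :: nat
    using phi_shift[of "2 ^ j * v" "2 ^ j * k"] by (simp add: algebra_simps)
  then show ?thesis unfolding PP_def by simp
qed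

lemma PP_minus: "PP (- v) = PP v"
  unfolding PP_def using phi_minus by (metis mult_minus_right)

lemma KK1: "1/3 + qq * KK = KK" using KK_eq by (simp add: algebra_simps)
lemma KK2: "1/3 + qq/3 + qq * qq * KK = KK"
proof -
  have "KK - qq * qq * KK = (1 + qq) * (KK * (1 - qq))" by (simp add: algebra_simps)
  also have "\<dots> = (1 + qq) / 3" by (subst KK_eq) simp
  finally show ?thesis by (simp add: algebra_simps)
qed

lemma PP_le_aux: "PP v \<le> KK + qq ^ N"
proof (induction N arbitrary: v)
  case 0
  have "PP v \<le> (\<Sum>j. qq ^ j * (1/2))"
    unfolding PP_def using qq_pos phi_le_half
    by (intro suminf_le summable_P summable_mult2 summable_qq) (simp add: mult_left_mono)
  also have "\<dots> = (1/2) * (1 / (1 - qq))"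
    using suminf_geometric[of qq] qq_pos qq_lt1 suminf_mult2[OF summable_qq, of "1/2"] by (simp add: mult.commute)
  also have "\<dots> \<le> 2" using qq_bounds by (simp add: divide_le_eq)
  also have "\<dots> \<le> KK + 1" using s2_bounds unfolding KK_def by simp
  finally show ?case by simp
next
  case (Suc N)
  have pw: "qq ^ Suc N = qq * qq ^ N" by simp
  show ?case
  proof (cases "phi v \<le> 1/3")
    case True
    have "qq * PP (2 * v) \<le> qq * (KK + qq ^ N)"
      using Suc.IH[of "2 * v"] qq_pos by (intro mult_left_mono) auto
    then have "qq * PP (2 * v) \<le> qq * KK + qq * qq ^ N" by (simp add: distrib_left)
    then show ?thesis using PP_rec[of v] True KK1 pw by linarith
  next
    case False
    have d: "phi (2 * v) = 1 - 2 * phi v" using False by (intro phi_double) simp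
    have e: "PP v = phi v + qq * phi (2 * v) + qq * qq * PP (2 * (2 * v))"
      using PP_rec[of v] PP_rec[of "2 * v"] by (simp add: algebra_simps)
    have f: "phi v + qq * phi (2 * v) \<le> 1/3 + qq / 3"
    proof -
      have "(1 - 2 * qq) * (phi v - 1/3) \<le> 0" using False qq_bounds
        by (intro mult_nonpos_nonneg) auto
      then show ?thesis unfolding d by (simp add: algebra_simps)
    qed
    have "qq * qq * PP (2 * (2 * v)) \<le> qq * qq * (KK + qq ^ N)"
      using Suc.IH qq_pos by (intro mult_left_mono) auto
    then have g: "qq * qq * PP (2 * (2 * v)) \<le> qq * qq * KK + qq * qq * qq ^ N"
      by (simp add: distrib_left)
    have "qq * (qq * qq ^ N) \<le> 1 * (qq * qq ^ N)" using qq_pos qq_lt1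
      by (intro mult_right_mono) auto
    then have "qq * qq * qq ^ N \<le> qq * qq ^ N" by (simp add: mult.assoc)
    then show ?thesis using e f g KK2 pw by linarith
  qed
qed

lemma le_qq_pow: assumes "\<And>N. (x::real) \<le> a + C * qq ^ N" "0 \<le> C" shows "x \<le> a"
proof (rule ccontr)
  assume "\<not> x \<le> a"
  then have d: "0 < (x - a) / (C + 1)" using assms(2) by simp
  obtain n where n: "qq ^ n < (x - a) / (C + 1)" using real_arch_pow_inv[OF d qq_lt1] by blast
  have "C * qq ^ n \<le> (C + 1) * qq ^ n" using qq_pos by (simp add: mult_right_mono)
  also have "\<dots> < x - a" using n assms(2) by (simp add: field_simps)
  finally show False using assms(1)[of n] by simp
qed

lemma PP_le_KK: "PP v \<le> KK"
  using le_qq_pow[of "PP v" KK 1] PP_le_aux by simp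

lemma PP_third: "PP (2/3) = KK" "PP (1/3) = KK"
proof -
  have p23: "phi (2/3) = 1/3"
  proof -
    have "phi (2/3) = phi (-1/3 + of_int 1)" by simp
    also have "\<dots> = phi (-1/3)" by (rule phi_shift)
    also have "\<dots> = phi (1/3)" using phi_minus[of "1/3"] by simp
    also have "\<dots> = 1/3" by (rule phi_small) auto
    finally show ?thesis .
  qed
  have s: "PP (1/3) = PP (2/3)"
  proof -
    have "PP (1/3) = PP (-2/3 + of_int 1)" by simp
    also have "\<dots> = PP (-2/3)" by (rule PP_shift)
    also have "\<dots> = PP (2/3)" using PP_minus[of "2/3"] by simp
    finally show ?thesis .
  qed
  have t: "PP (4/3) = PP (1/3)"
    using PP_shift[of "1/3" 1] by simp
  have a: "PP (2/3) = 1/3 + qq * PP (1/3)"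
    using PP_rec[of "2/3"] p23 t by simp
  then have "PP (2/3) * (1 - qq) = KK * (1 - qq)" using s KK_eq by (simp add: algebra_simps)
  then show "PP (2/3) = KK" using qq_lt1 by simp
  then show "PP (1/3) = KK" using s by simp
qed

lemma ex_scale: "0 < (s::real) \<Longrightarrow> s \<le> 1 \<Longrightarrow> \<exists>k::nat. 1/2 < 2 ^ k * s \<and> 2 ^ k * s \<le> 1"
proof -
  assume s: "0 < s" "s \<le> 1"
  obtain n where n: "(1/2::real) ^ n < s" using real_arch_pow_inv[OF s(1), of "1/2"] by auto
  have "\<forall>s::real. (1/2) ^ n < s \<longrightarrow> s \<le> 1 \<longrightarrow> (\<exists>k::nat. 1/2 < 2 ^ k * s \<and> 2 ^ k * s \<le> 1)"
  proof (induction n)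
    case 0 then show ?case by auto
  next
    case (Suc n)
    show ?case
    proof (intro allI impI)
      fix s :: real assume a: "(1/2) ^ Suc n < s" "s \<le> 1"
      show "\<exists>k::nat. 1/2 < 2 ^ k * s \<and> 2 ^ k * s \<le> 1"
      proof (cases "1/2 < s")
        case True then show ?thesis using a by (intro exI[of _ 0]) simp
      next
        case False
        then have "(1/2) ^ n < 2 * s" "2 * s \<le> 1" using a by auto
        then obtain k where "1/2 < 2 ^ k * (2 * s) \<and> 2 ^ k * (2 * s) \<le> 1" using Suc.IH by blast
        then show ?thesis by (intro exI[of _ "Suc k"]) (simp add: algebra_simps)
      qed
    qed
  qed
  then show ?thesis using n s by blast
qed

lemma PP_abs_le: "\<bar>PP a - PP b\<bar> \<le> KK"
  using PP_nonneg[of a] PP_nonneg[of b] PP_le_KK[of a] PP_le_KK[of b] by linarith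

lemma PP_inc_split:
  "\<bar>PP (w + s) - PP w\<bar> \<le> (\<Sum>j<k. qq ^ j * (2 ^ j * \<bar>s\<bar>)) + qq ^ k * \<bar>PP (2 ^ k * w + 2 ^ k * s) - PP (2 ^ k * w)\<bar>"
proof -
  have "PP (w + s) - PP w = (\<Sum>j<k. qq ^ j * (phi (2 ^ j * (w + s)) - phi (2 ^ j * w))) + qq ^ k * (PP (2 ^ k * w + 2 ^ k * s) - PP (2 ^ k * w))"
    using PP_split[of "w + s" k] PP_split[of w k]
    by (simp add: algebra_simps sum_subtractf)
  also have "\<bar>\<dots>\<bar> \<le> (\<Sum>j<k. \<bar>qq ^ j * (phi (2 ^ j * (w + s)) - phi (2 ^ j * w))\<bar>) + \<bar>qq ^ k * (PP (2 ^ k * w + 2 ^ k * s) - PP (2 ^ k * w))\<bar>"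
    by (rule order.trans[OF abs_triangle_ineq add_right_mono[OF sum_abs]])
  also have "\<dots> \<le> (\<Sum>j<k. qq ^ j * (2 ^ j * \<bar>s\<bar>)) + qq ^ k * \<bar>PP (2 ^ k * w + 2 ^ k * s) - PP (2 ^ k * w)\<bar>"
  proof (intro add_mono sum_mono)
    fix j assume "j \<in> {..<k}"
    have "\<bar>phi (2 ^ j * (w + s)) - phi (2 ^ j * w)\<bar> \<le> \<bar>2 ^ j * (w + s) - 2 ^ j * w\<bar>" by (rule phi_lip)
    also have "\<dots> = 2 ^ j * \<bar>s\<bar>" by (simp add: algebra_simps abs_mult)
    finally show "\<bar>qq ^ j * (phi (2 ^ j * (w + s)) - phi (2 ^ j * w))\<bar> \<le> qq ^ j * (2 ^ j * \<bar>s\<bar>)"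
      using qq_pos by (simp add: abs_mult mult_left_mono)
  qed (use qq_pos in \<open>simp add: abs_mult\<close>)
  finally show ?thesis .
qed

lemma geo_qq: "(\<Sum>j<k. qq ^ j * 2 ^ j) = (sqrt 2 ^ k - 1) * (sqrt 2 + 1)"
proof -
  have "(\<Sum>j<k. qq ^ j * 2 ^ j) = (\<Sum>j<k. sqrt 2 ^ j)"
    by (simp add: qq_alt power_mult_distrib[symmetric])
  also have "\<dots> = (sqrt 2 ^ k - 1) / (sqrt 2 - 1)"
    by (rule geometric_sum) simp
  also have "\<dots> = (sqrt 2 ^ k - 1) * (sqrt 2 + 1)"
  proof -
    have "(sqrt 2 - 1) * (sqrt 2 + 1) = (1::real)" by (simp add: algebra_simps)
    moreover have "sqrt 2 - 1 \<noteq> (0::real)" by simp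
    ultimately show ?thesis by (simp add: field_simps)
  qed
  finally show ?thesis .
qed

lemma pow_facts: "qq ^ k * sqrt 2 ^ k = 1" "(2::real) ^ k = sqrt 2 ^ k * sqrt 2 ^ k"
proof -
  show "qq ^ k * sqrt 2 ^ k = 1" by (simp add: power_mult_distrib[symmetric] qq_s2)
  show "(2::real) ^ k = sqrt 2 ^ k * sqrt 2 ^ k" by (simp add: power_mult_distrib[symmetric])
qed


lemma six_le: "(a::real) \<le> b \<Longrightarrow> 6 * x = a \<Longrightarrow> 6 * y = b \<Longrightarrow> x \<le> y" by linarith
lemma diff_nonneg_le: "0 \<le> (A::real) \<Longrightarrow> Y - X = A \<Longrightarrow> X \<le> Y" by linarith
lemma lin3: "(X::real) \<le> K0 \<Longrightarrow> 0 \<le> Y \<Longrightarrow> 0 \<le> Z \<Longrightarrow> K0 \<le> C0 \<Longrightarrow> 0 \<le> C0 - X + Y + Z" by linarith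

lemma stepA_s:
  fixes s c T :: real
  assumes s: "1.414 < s" "s < 1.41422" "s * s = 2" and c: "1/2 \<le> c" "c \<le> 2/3" and T: "T = s \<or> 2 \<le> T"
  shows "6 * c * (T-1) * (s+1) + 2 * (2+s) * T \<le> (s+4) * (T * T) + 3 * s * c"
proof (cases "T = s")
  case True
  have e: "(s+4) * (T * T) + 3 * s * c - (6 * c * (T-1) * (s+1) + 2 * (2+s) * T) = (2 - s) * (2 - 3 * c) + (s * s - 2) * (s + 2 - 6 * c)"
    unfolding True by algebra
  have "0 \<le> (2 - s) * (2 - 3 * c)" using s c by (intro mult_nonneg_nonneg) auto
  then show ?thesis using e s(3) by simp
next
  case False
  then have T2: "2 \<le> T" using T by simp
  define d where "d = T - 2"
  have d0: "0 \<le> d" using T2 d_def by simp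
  have e: "(s+4) * (T * T) + 3 * s * c - (6 * c * (T-1) * (s+1) + 2 * (2+s) * T) = (8 - c * (3 * s+6)) + d * (2 * s+12 - c * (6 * s+6)) + (s+4) * (d * d)"
    unfolding d_def by algebra
  have m1: "c * (3 * s+6) \<le> (2/3) * (3 * 1.41422+6)" using s c by (intro mult_mono) auto
  have m2: "c * (6 * s+6) \<le> (2/3) * (6 * 1.41422+6)" using s c by (intro mult_mono) auto
  have "0 \<le> d * (2 * s+12 - c * (6 * s+6))" using d0 m2 s by (intro mult_nonneg_nonneg) auto
  moreover have "0 \<le> (s+4) * (d * d)" using s by simp
  ultimately have "0 \<le> 8 - c * (3 * s + 6) + d * (2 * s + 12 - c * (6 * s + 6)) + (s + 4) * (d * d)"
    using m1 by (intro lin3) auto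
  then show ?thesis using e by (rule diff_nonneg_le)
qed

lemma stepB_s:
  fixes s c T :: real
  assumes s: "1.414 < s" "s < 1.41422" "s * s = 2" and c: "2/3 \<le> c" "c \<le> 1" and T: "2 \<le> T"
  shows "6 * c * (T-1) * (s+1) + (4 * s+4-3 * s * c) * T \<le> (s+4) * (T * T) + 3 * s * c"
proof -
  define d where "d = T - 2"
  have d0: "0 \<le> d" using T d_def by simp
  have e: "(s+4) * (T * T) + 3 * s * c - (6 * c * (T-1) * (s+1) + (4 * s+4-3 * s * c) * T) = (8 - 4 * s - c * (6-3 * s)) + d * (12 - c * (3 * s+6)) + (s+4) * (d * d)"
    unfolding d_def by algebra
  have m1: "c * (6-3 * s) \<le> 1 * (6-3 * s)" using s c by (intro mult_right_mono) auto
  have m2: "c * (3 * s+6) \<le> 1 * (3 * 1.41422+6)" using s c by (intro mult_mono) auto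
  have s2: "s < 2" using s(2) by simp
  have Y0: "0 \<le> d * (12 - c * (3 * s+6))" using d0 m2 s by (intro mult_nonneg_nonneg) auto
  have Z0: "0 \<le> (s+4) * (d * d)" using s by simp
  have "0 \<le> (8 - 4 * s) - c * (6 - 3 * s) + d * (12 - c * (3 * s + 6)) + (s + 4) * (d * d)"
  proof -
    have "1 * (6 - 3 * s) \<le> 8 - 4 * s" using s2 by simp
    then show ?thesis by (rule lin3[OF m1 Y0 Z0])
  qed
  then show ?thesis using e by (rule diff_nonneg_le)
qed

lemma BBqq: "BB - qq = (sqrt 2 + 4) / 6" unfolding BB_def qq_alt by (simp add: field_simps)

lemma stepA:
  assumes c: "1/2 \<le> c" "c \<le> 2/3" and T: "T = sqrt 2 \<or> 2 \<le> T"
  shows "c * (T-1) * (sqrt 2+1) + KK * T \<le> (BB-qq) * (T * T) + qq * c"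
proof -
  have "6 * c * (T-1) * (sqrt 2+1) + 2 * (2+sqrt 2) * T \<le> (sqrt 2+4) * (T * T) + 3 * sqrt 2 * c"
    using stepA_s[OF s2_bounds _ c T] by simp
  moreover have "6 * (c * (T-1) * (sqrt 2+1) + KK * T) = 6 * c * (T-1) * (sqrt 2+1) + 2 * (2+sqrt 2) * T"
    unfolding KK_def by (simp add: algebra_simps)
  moreover have "6 * ((BB-qq) * (T * T) + qq * c) = (sqrt 2+4) * (T * T) + 3 * sqrt 2 * c"
    unfolding BB_def qq_alt by (simp add: algebra_simps)
  ultimately show ?thesis by (rule six_le)
qed

lemma stepB:
  assumes c: "2/3 \<le> c" "c \<le> 1" and T: "2 \<le> T"
  shows "c * (T-1) * (sqrt 2+1) + (BB - qq * c) * T \<le> (BB-qq) * (T * T) + qq * c"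
proof -
  have "6 * c * (T-1) * (sqrt 2+1) + (4 * sqrt 2+4-3 * sqrt 2 * c) * T \<le> (sqrt 2+4) * (T * T) + 3 * sqrt 2 * c"
    using stepB_s[OF s2_bounds _ c T] by simp
  moreover have "6 * (c * (T-1) * (sqrt 2+1) + (BB - qq * c) * T) = 6 * c * (T-1) * (sqrt 2+1) + (4 * sqrt 2+4-3 * sqrt 2 * c) * T"
    unfolding BB_def qq_alt by (simp add: algebra_simps)
  moreover have "6 * ((BB-qq) * (T * T) + qq * c) = (sqrt 2+4) * (T * T) + 3 * sqrt 2 * c"
    unfolding BB_def qq_alt by (simp add: algebra_simps)
  ultimately show ?thesis by (rule six_le)
qed


lemma BB_ge: "KK \<le> BB - qq * (2/3)" unfolding KK_def BB_def qq_alt by simp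
lemma BB_nonneg: "0 \<le> BB - qq * c" if "c \<le> 1" for c
proof -
  have "qq * c \<le> qq * 1" using that qq_pos by (intro mult_left_mono) auto
  then have "qq * c \<le> qq" by simp
  moreover have "8/5 \<le> BB" "qq < 35361/50000" using s2_bounds qq_bounds unfolding BB_def by simp_all
  ultimately show ?thesis by linarith
qed
lemma KK_nonneg: "0 \<le> KK" unfolding KK_def by simp

lemma sqrt2_pow_ge2: "2 \<le> k \<Longrightarrow> 2 \<le> sqrt (2::real) ^ k"
proof -
  assume "2 \<le> k"
  then have "sqrt (2::real) ^ 2 \<le> sqrt 2 ^ k" by (intro power_increasing) auto
  then show ?thesis by simp
qed

lemma scale_conv:
  fixes s c' T X Y :: real and k :: nat
  assumes T: "T = sqrt 2 ^ k" and c': "c' = 2 ^ k * s"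
    and ineq: "c' * (T - 1) * (sqrt 2 + 1) + X * T \<le> (BB - qq) * (T * T) + qq * c'"
    and that: "0 \<le> s"
  shows "(\<Sum>j<k. qq ^ j * (2 ^ j * \<bar>s\<bar>)) + qq ^ k * X \<le> (BB - qq) + qq * \<bar>s\<bar>"
proof -
  have Tpos: "0 < T" using T by simp
  have "(\<Sum>j<k. qq ^ j * (2 ^ j * \<bar>s\<bar>)) = (\<Sum>j<k. qq ^ j * 2 ^ j) * s"
    using that by (simp add: sum_distrib_right mult.assoc)
  also have "\<dots> = (T - 1) * (sqrt 2 + 1) * s" using geo_qq[of k] T by simp
  finally have sum: "(\<Sum>j<k. qq ^ j * (2 ^ j * \<bar>s\<bar>)) = (T - 1) * (sqrt 2 + 1) * s" .
  have TT: "2 ^ k = T * T" using pow_facts(2)[of k] T by simp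
  have qT: "qq ^ k * T = 1" using pow_facts(1)[of k] T by simp
  have c'2: "c' = (T * T) * s" using c' TT by simp
  define A where "A = (T - 1) * (sqrt 2 + 1)"
  have "((\<Sum>j<k. qq ^ j * (2 ^ j * \<bar>s\<bar>)) + qq ^ k * X) * (T * T)
        = A * ((T * T) * s) + ((qq ^ k * T) * X) * T"
    unfolding sum A_def by (simp only: algebra_simps)
  also have "\<dots> = A * c' + X * T" using c'2 qT by simp
  also have "\<dots> \<le> (BB - qq) * (T * T) + qq * c'" using ineq unfolding A_def by (simp add: mult.assoc mult.commute mult.left_commute)
  also have "\<dots> = ((BB - qq) + qq * \<bar>s\<bar>) * (T * T)" using c'2 that by (simp add: algebra_simps)
  finally show ?thesis using Tpos by (simp add: mult_le_cancel_right_pos)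
qed

lemma M_aux: "2/3 \<le> c \<Longrightarrow> c \<le> 1 \<Longrightarrow> \<bar>PP (u + c) - PP u\<bar> \<le> BB - qq * c + 2 * KK * qq ^ N"
proof (induction N arbitrary: u c)
  case 0
  then show ?case using PP_abs_le[of "u + c" u] BB_nonneg[of c] KK_nonneg by simp
next
  case (Suc N)
  define s where "s = 1 - c"
  have s01: "0 \<le> s" "s \<le> 1/3" using Suc.prems s_def by auto
  have "u + c = (u - s) + of_int 1" using s_def by simp
  then have "PP (u + c) = PP (u - s)" using PP_shift[of "u - s" 1] by metis
  then have eq: "\<bar>PP (u + c) - PP u\<bar> = \<bar>PP ((u - s) + s) - PP (u - s)\<bar>" by (simp add: abs_minus_commute)
  have "qq * c = qq - qq * s" unfolding s_def by (simp add: algebra_simps)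
  then have rhs: "BB - qq * c = (BB - qq) + qq * \<bar>s\<bar>" using s01 by simp
  have pN: "0 \<le> 2 * KK * qq ^ Suc N" using KK_nonneg qq_pos by simp
  show ?case
  proof (cases "s = 0")
    case True
    then show ?thesis using eq BB_nonneg[of c] Suc.prems pN by simp
  next
    case False
    then have spos: "0 < s" using s01 by simp
    obtain k where k: "1/2 < 2 ^ k * s" "2 ^ k * s \<le> 1" using ex_scale[OF spos] s01 by auto
    have k1: "k \<noteq> 0" using k s01 by (cases k) auto
    define w where "w = u - s"
    define c' where "c' = 2 ^ k * s"
    define T where "T = sqrt (2::real) ^ k"
    have split: "\<bar>PP (w + s) - PP w\<bar> \<le> (\<Sum>j<k. qq ^ j * (2 ^ j * \<bar>s\<bar>)) + qq ^ k * \<bar>PP (2 ^ k * w + c') - PP (2 ^ k * w)\<bar>"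
      using PP_inc_split[of w s k] c'_def by simp
    have qk: "0 < qq ^ k" using qq_pos by simp
    show ?thesis
    proof (cases "c' \<le> 2/3")
      case True
      have Tc: "T = sqrt 2 \<or> 2 \<le> T"
      proof (cases "k = 1")
        case True then show ?thesis using T_def by simp
      next
        case False then show ?thesis using k1 T_def sqrt2_pow_ge2[of k] by simp
      qed
      have st: "c' * (T - 1) * (sqrt 2 + 1) + KK * T \<le> (BB - qq) * (T * T) + qq * c'"
        using stepA[OF _ True Tc] k c'_def by simp
      have "qq ^ k * \<bar>PP (2 ^ k * w + c') - PP (2 ^ k * w)\<bar> \<le> qq ^ k * KK"
        using PP_abs_le qk by (intro mult_left_mono) auto
      then have "\<bar>PP (w + s) - PP w\<bar> \<le> (\<Sum>j<k. qq ^ j * (2 ^ j * \<bar>s\<bar>)) + qq ^ k * KK"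
        using split by linarith
      also have "\<dots> \<le> (BB - qq) + qq * \<bar>s\<bar>"
        by (rule scale_conv[OF T_def c'_def st s01(1)])
      finally show ?thesis using eq rhs pN w_def by simp
    next
      case False
      have k2: "2 \<le> k"
      proof (rule ccontr)
        assume "\<not> 2 \<le> k"
        then have "k = 1" using k1 by simp
        then show False using False c'_def s01 by simp
      qed
      have T2: "2 \<le> T" using sqrt2_pow_ge2[OF k2] T_def by simp
      have c'1: "2/3 \<le> c'" "c' \<le> 1" using False k c'_def by auto
      have st: "c' * (T - 1) * (sqrt 2 + 1) + (BB - qq * c') * T \<le> (BB - qq) * (T * T) + qq * c'"
        by (rule stepB[OF c'1 T2])
      have IH: "\<bar>PP (2 ^ k * w + c') - PP (2 ^ k * w)\<bar> \<le> BB - qq * c' + 2 * KK * qq ^ N"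
        by (rule Suc.IH[OF c'1])
      have qkq: "qq ^ k \<le> qq"
      proof -
        have "qq ^ k \<le> qq ^ 1" using qq_pos qq_lt1 k1 by (intro power_decreasing) auto
        then show ?thesis by simp
      qed
      have "qq ^ k * \<bar>PP (2 ^ k * w + c') - PP (2 ^ k * w)\<bar> \<le> qq ^ k * (BB - qq * c' + 2 * KK * qq ^ N)"
        using IH qk by (intro mult_left_mono) auto
      also have "\<dots> = qq ^ k * (BB - qq * c') + qq ^ k * (2 * KK * qq ^ N)" by (simp add: algebra_simps)
      also have "qq ^ k * (2 * KK * qq ^ N) \<le> qq * (2 * KK * qq ^ N)"
        using qkq KK_nonneg qq_pos by (intro mult_right_mono) auto
      finally have inner: "qq ^ k * \<bar>PP (2 ^ k * w + c') - PP (2 ^ k * w)\<bar> \<le> qq ^ k * (BB - qq * c') + 2 * KK * qq ^ Suc N"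
        by (simp add: algebra_simps)
      have "(\<Sum>j<k. qq ^ j * (2 ^ j * \<bar>s\<bar>)) + qq ^ k * (BB - qq * c') \<le> (BB - qq) + qq * \<bar>s\<bar>"
        by (rule scale_conv[OF T_def c'_def st s01(1)])
      moreover have "\<bar>PP (u + c) - PP u\<bar> = \<bar>PP (w + s) - PP w\<bar>" using eq w_def by simp
      ultimately show ?thesis using split inner rhs by linarith
    qed
  qed
qed

lemma M_bound: "1/2 \<le> c \<Longrightarrow> c \<le> 1 \<Longrightarrow> \<bar>PP (u + c) - PP u\<bar> \<le> BB - qq * c"
proof -
  assume c: "1/2 \<le> c" "c \<le> 1"
  show ?thesis
  proof (cases "c \<le> 2/3")
    case True
    have "qq * c \<le> qq * (2/3)" using True qq_pos by (intro mult_left_mono) auto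
    then show ?thesis using PP_abs_le[of "u + c" u] BB_ge by linarith
  next
    case False
    show ?thesis
      using le_qq_pow[of "\<bar>PP (u + c) - PP u\<bar>" "BB - qq * c" "2 * KK"] M_aux[of c u] False c KK_nonneg
      by (simp add: mult.assoc)
  qed
qed

lemma e00_index: "0 \<le> a \<Longrightarrow> fs_e00 (a - real k) = (if k = nat \<lfloor>a\<rfloor> then phi a else 0)"
proof -
  assume a: "0 \<le> a"
  have fl: "0 \<le> \<lfloor>a\<rfloor>" using a by simp
  show ?thesis
  proof (cases "k = nat \<lfloor>a\<rfloor>")
    case True
    then have "a - real k = frac a" using fl by (simp add: frac_def)
    then show ?thesis using True by (simp add: phi_def)
  next
    case False
    then have "int k < \<lfloor>a\<rfloor> \<or> int k > \<lfloor>a\<rfloor>" using fl by linarith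
    then have "a - real k \<ge> 1 \<or> a - real k \<le> 0"
    proof
      assume "int k < \<lfloor>a\<rfloor>"
      then have "int k + 1 \<le> \<lfloor>a\<rfloor>" by simp
      then have "of_int (int k + 1) \<le> a" by (simp only: le_floor_iff)
      then have "real k + 1 \<le> a" by simp
      then show ?thesis by simp
    next
      assume "int k > \<lfloor>a\<rfloor>"
      then have "\<lfloor>a\<rfloor> + 1 \<le> int k" by simp
      have "a < of_int (int k)" using \<open>int k > \<lfloor>a\<rfloor>\<close> by (simp only: floor_less_iff)
      then have "a < real k" by simp
      then show ?thesis by simp
    qed
    then show ?thesis using False e00_zero by auto
  qed
qed

lemma phi_nat: "phi (real n) = 0"
  using phi_shift_nat[of 0 n] phi_small[of 0] by simp

lemma sum_e00: "0 \<le> a \<Longrightarrow> a \<le> real N \<Longrightarrow> (\<Sum>k<N. fs_e00 (a - real k)) = phi a"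
proof -
  assume a: "0 \<le> a" "a \<le> real N"
  have "(\<Sum>k<N. fs_e00 (a - real k)) = (\<Sum>k<N. if k = nat \<lfloor>a\<rfloor> then phi a else 0)"
    using e00_index[OF a(1)] by simp
  also have "\<dots> = (if nat \<lfloor>a\<rfloor> < N then phi a else 0)" by (simp add: sum.delta')
  also have "\<dots> = phi a"
  proof (cases "nat \<lfloor>a\<rfloor> < N")
    case False
    then have "int N \<le> \<lfloor>a\<rfloor>" using a(1) by (simp add: not_less le_nat_iff)
    then have "of_int (int N) \<le> a" by (simp only: le_floor_iff)
    then have "real N \<le> a" by simp
    then have "a = real N" using a by simp
    then show ?thesis using False phi_nat by simp
  qed simp
  finally show ?thesis .
qed

lemma phi_le_frac: "phi a \<le> frac a" "phi a \<le> 1 - frac a"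
  unfolding phi_eq by auto

lemma sum_e00_diff:
  assumes a: "0 \<le> a" "a \<le> b" "b \<le> a + 1"
  shows "(\<Sum>k<N. \<bar>fs_e00 (b - real k) - fs_e00 (a - real k)\<bar>) \<le> b - a"
proof -
  define ka where "ka = nat \<lfloor>a\<rfloor>"
  define kb where "kb = nat \<lfloor>b\<rfloor>"
  have b0: "0 \<le> b" using a by simp
  have eq: "(\<Sum>k<N. \<bar>fs_e00 (b - real k) - fs_e00 (a - real k)\<bar>)
      = (\<Sum>k<N. \<bar>(if k = kb then phi b else 0) - (if k = ka then phi a else 0)\<bar>)"
    using e00_index[OF a(1)] e00_index[OF b0] ka_def kb_def by simp
  show ?thesis
  proof (cases "ka = kb")
    case True
    have "(\<Sum>k<N. \<bar>(if k = kb then phi b else 0) - (if k = ka then phi a else 0)\<bar>)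
        = (\<Sum>k<N. if k = kb then \<bar>phi b - phi a\<bar> else 0)"
      using True by (intro sum.cong) auto
    also have "\<dots> \<le> \<bar>phi b - phi a\<bar>" by (simp add: sum.delta')
    also have "\<dots> \<le> \<bar>b - a\<bar>" by (rule phi_lip)
    finally show ?thesis using eq a by simp
  next
    case False
    have "\<lfloor>b\<rfloor> \<le> \<lfloor>a + 1\<rfloor>" by (rule floor_mono) (use a in simp)
    then have fl: "\<lfloor>b\<rfloor> \<le> \<lfloor>a\<rfloor> + 1" "\<lfloor>a\<rfloor> \<le> \<lfloor>b\<rfloor>" using a by (auto intro: floor_mono)
    then have kb1: "\<lfloor>b\<rfloor> = \<lfloor>a\<rfloor> + 1" using False ka_def kb_def by simp
    have "(\<Sum>k<N. \<bar>(if k = kb then phi b else 0) - (if k = ka then phi a else 0)\<bar>)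
        \<le> (\<Sum>k<N. (if k = kb then phi b else 0) + (if k = ka then phi a else 0))"
      using phi_nonneg False by (intro sum_mono) auto
    also have "\<dots> = (if kb < N then phi b else 0) + (if ka < N then phi a else 0)"
      by (simp add: sum.distrib sum.delta')
    also have "\<dots> \<le> phi b + phi a" using phi_nonneg[of a] phi_nonneg[of b] by auto
    also have "\<dots> \<le> frac b + (1 - frac a)" using phi_le_frac[of a] phi_le_frac[of b] by linarith
    also have "\<dots> = b - a" using kb1 by (simp add: frac_def)
    finally show ?thesis using eq by simp
  qed
qed

lemma powr_qq: "2 powr (- real m / 2) = qq ^ m"
proof -
  have "2 powr (real m / 2) = (2 powr (1/2)) powr real m" by (simp add: powr_powr)
  also have "\<dots> = sqrt 2 ^ m" by (simp add: powr_half_sqrt powr_realpow)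
  finally have "2 powr (real m / 2) = sqrt 2 ^ m" .
  then show ?thesis
    by (simp add: powr_minus qq_def power_one_over minus_divide_left[symmetric] inverse_eq_divide)
qed

lemma fs_e_eq: "fs_e m (int k) t = qq ^ m * fs_e00 (2 ^ m * t - real k)"
  unfolding fs_e_def powr_qq by simp

lemma fs_level_eq: "fs_level \<theta> m t = qq ^ m * (\<Sum>k<2 ^ m. \<theta> m k * fs_e00 (2 ^ m * t - real k))"
  unfolding fs_level_def fs_e_eq sum_distrib_left by (intro sum.cong refl) (simp only: mult.left_commute)

definition pm1 :: "(nat \<Rightarrow> nat \<Rightarrow> real) \<Rightarrow> bool" where
  "pm1 \<theta> \<longleftrightarrow> (\<forall>m k. \<theta> m k = 1 \<or> \<theta> m k = -1)"

lemma pm1_abs: "pm1 \<theta> \<Longrightarrow> \<bar>\<theta> m k\<bar> = 1"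
  unfolding pm1_def by (metis abs_minus_cancel abs_one)

lemma level_abs_le:
  assumes "pm1 \<theta>" "0 \<le> t" "t \<le> 1"
  shows "\<bar>fs_level \<theta> m t\<bar> \<le> qq ^ m * phi (2 ^ m * t)"
proof -
  have "\<bar>\<Sum>k<2 ^ m. \<theta> m k * fs_e00 (2 ^ m * t - real k)\<bar> \<le> (\<Sum>k<2 ^ m. \<bar>\<theta> m k * fs_e00 (2 ^ m * t - real k)\<bar>)"
    by (rule sum_abs)
  also have "\<dots> = (\<Sum>k<(2::nat) ^ m. fs_e00 (2 ^ m * t - real k))"
    using pm1_abs[OF assms(1)] e00_nonneg by (simp add: abs_mult)
  also have "\<dots> = phi (2 ^ m * t)"
    using assms by (intro sum_e00) (auto simp: mult_le_cancel_left1)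
  finally show ?thesis unfolding fs_level_eq using qq_pos by (simp add: abs_mult mult_left_mono)
qed

lemma level_abs_le2:
  assumes "pm1 \<theta>" "0 \<le> t" "t \<le> 1"
  shows "\<bar>fs_level \<theta> m t\<bar> \<le> qq ^ m"
proof -
  have "qq ^ m * phi (2 ^ m * t) \<le> qq ^ m * 1"
    using qq_pos phi_le_half[of "2 ^ m * t"] by (intro mult_left_mono) auto
  then show ?thesis using level_abs_le[OF assms, of m] by simp
qed

lemma level_diff_small:
  assumes "pm1 \<theta>" "0 \<le> t" "0 \<le> h" "t + h \<le> 1" "2 ^ m * h \<le> 1"
  shows "\<bar>fs_level \<theta> m (t + h) - fs_level \<theta> m t\<bar> \<le> qq ^ m * (2 ^ m * h)"
proof -
  have "fs_level \<theta> m (t + h) - fs_level \<theta> m t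
      = qq ^ m * (\<Sum>k<2 ^ m. \<theta> m k * (fs_e00 (2 ^ m * (t + h) - real k) - fs_e00 (2 ^ m * t - real k)))"
    unfolding fs_level_eq by (simp add: right_diff_distrib sum_subtractf)
  moreover have "\<bar>\<Sum>k<2 ^ m. \<theta> m k * (fs_e00 (2 ^ m * (t + h) - real k) - fs_e00 (2 ^ m * t - real k))\<bar>
      \<le> (\<Sum>k<(2::nat) ^ m. \<bar>fs_e00 (2 ^ m * (t + h) - real k) - fs_e00 (2 ^ m * t - real k)\<bar>)"
    using pm1_abs[OF assms(1)] by (auto intro!: order.trans[OF sum_abs] simp: abs_mult)
  moreover have "(\<Sum>k<(2::nat) ^ m. \<bar>fs_e00 (2 ^ m * (t + h) - real k) - fs_e00 (2 ^ m * t - real k)\<bar>) \<le> 2 ^ m * (t + h) - 2 ^ m * t"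
    using assms by (intro sum_e00_diff) (auto simp: algebra_simps)
  ultimately show ?thesis using qq_pos by (simp add: abs_mult mult_left_mono algebra_simps)
qed

lemma level_diff_big:
  assumes "pm1 \<theta>" "0 \<le> t" "0 \<le> h" "t + h \<le> 1"
  shows "\<bar>fs_level \<theta> m (t + h) - fs_level \<theta> m t\<bar> \<le> qq ^ m * (phi (2 ^ m * (t + h)) + phi (2 ^ m * t))"
  using level_abs_le[OF assms(1), of "t + h" m] level_abs_le[OF assms(1), of t m] assms
  by (simp add: distrib_left)

lemma summable_level:
  assumes "pm1 \<theta>" "0 \<le> t" "t \<le> 1"
  shows "summable (\<lambda>m. fs_level \<theta> m t)"
  by (rule summable_comparison_test[OF _ summable_qq]) (use level_abs_le2[OF assms] in auto)

lemma uniform_level: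
  assumes "pm1 \<theta>"
  shows "uniform_limit {0..1} (\<lambda>n t. \<Sum>m<n. fs_level \<theta> m t) (fs_series \<theta>) sequentially"
proof -
  have "uniform_limit {0..1} (\<lambda>n t. \<Sum>m<n. fs_level \<theta> m t) (\<lambda>t. \<Sum>m. fs_level \<theta> m t) sequentially"
    by (rule Weierstrass_m_test[OF _ summable_qq]) (use level_abs_le2[OF assms] in auto)
  moreover have "(\<lambda>t. \<Sum>m. fs_level \<theta> m t) = fs_series \<theta>" by (simp add: fs_series_def fun_eq_iff)
  ultimately show ?thesis by simp
qed

lemma pm1_fs_X: "pm1 \<theta> \<Longrightarrow> fs_series \<theta> \<in> fs_X"
  unfolding fs_X_def using uniform_level by (auto simp: pm1_def)

lemma fs_X_pm1: "x \<in> fs_X \<Longrightarrow> \<exists>\<theta>. pm1 \<theta> \<and> x = fs_series \<theta>"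
  unfolding fs_X_def pm1_def by blast

lemma x_hat_eq: "0 \<le> t \<Longrightarrow> t \<le> 1 \<Longrightarrow> x_hat t = PP t"
proof -
  assume t: "0 \<le> t" "t \<le> 1"
  have "fs_level (\<lambda>m k. 1) m t = qq ^ m * phi (2 ^ m * t)" for m
  proof -
    have "(\<Sum>k<(2::nat) ^ m. fs_e00 (2 ^ m * t - real k)) = phi (2 ^ m * t)"
      using t by (intro sum_e00) (auto simp: mult_le_cancel_left1)
    then show ?thesis unfolding fs_level_eq by simp
  qed
  then show ?thesis unfolding x_hat_def fs_series_def PP_def by simp
qed

definition th_star :: "nat \<Rightarrow> nat \<Rightarrow> real" where
  "th_star = (\<lambda>m k. if m = 0 then 1 else if k < 2 ^ (m - 1) then 1 else -1)"

lemma pm1_star: "pm1 th_star" unfolding pm1_def th_star_def by auto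

lemma x_star_def2: "x_star = fs_series th_star" unfolding x_star_def th_star_def by simp

lemma star_level_left:
  assumes "0 \<le> t" "t \<le> 1/2"
  shows "fs_level th_star m t = qq ^ m * phi (2 ^ m * t)"
proof -
  have "th_star m k * fs_e00 (2 ^ m * t - real k) = fs_e00 (2 ^ m * t - real k)" if "k < 2 ^ m" for k
  proof (cases "m = 0 \<or> k < 2 ^ (m - 1)")
    case True then show ?thesis by (auto simp: th_star_def)
  next
    case False
    then have m: "m \<ge> 1" "2 ^ (m - 1) \<le> k" by auto
    have "(2::real) ^ m = 2 * 2 ^ (m - 1)" using m by (metis One_nat_def Suc_pred le_simps(3) power_Suc zero_less_one)
    then have "2 ^ m * t \<le> 2 ^ (m - 1)" using assms by simp
    also have "\<dots> \<le> real k" using m(2) by (metis of_nat_le_iff of_nat_numeral of_nat_power)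
    finally show ?thesis by (simp add: e00_zero)
  qed
  then have "(\<Sum>k<(2::nat) ^ m. th_star m k * fs_e00 (2 ^ m * t - real k)) = (\<Sum>k<(2::nat) ^ m. fs_e00 (2 ^ m * t - real k))"
    by (intro sum.cong) auto
  also have "\<dots> = phi (2 ^ m * t)" using assms by (intro sum_e00) (auto simp: mult_le_cancel_left1)
  finally show ?thesis unfolding fs_level_eq by simp
qed

lemma star_level_right:
  assumes "1/2 \<le> t" "t \<le> 1" "m \<ge> 1"
  shows "fs_level th_star m t = - (qq ^ m * phi (2 ^ m * t))"
proof -
  have "th_star m k * fs_e00 (2 ^ m * t - real k) = - fs_e00 (2 ^ m * t - real k)" if "k < 2 ^ m" for k
  proof (cases "k < 2 ^ (m - 1)")
    case False then show ?thesis using assms by (auto simp: th_star_def)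
  next
    case True
    have "(2::real) ^ m = 2 * 2 ^ (m - 1)" using assms by (metis One_nat_def Suc_pred le_simps(3) power_Suc zero_less_one)
    then have "2 ^ (m - 1) \<le> 2 ^ m * t" using assms by simp
    moreover have "real k + 1 \<le> 2 ^ (m - 1)" using True by (metis Suc_leI of_nat_Suc of_nat_le_iff of_nat_numeral of_nat_power add.commute)
    ultimately show ?thesis by (simp add: e00_zero)
  qed
  then have "(\<Sum>k<(2::nat) ^ m. th_star m k * fs_e00 (2 ^ m * t - real k)) = (\<Sum>k<(2::nat) ^ m. - fs_e00 (2 ^ m * t - real k))"
    by (intro sum.cong) auto
  also have "\<dots> = - phi (2 ^ m * t)" using assms by (subst sum_negf, subst sum_e00) (auto simp: mult_le_cancel_left1)
  finally show ?thesis unfolding fs_level_eq by simp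
qed

lemma powr_s2: "2 powr (real m / 2) = sqrt 2 ^ m"
proof -
  have "2 powr (real m / 2) = (2 powr (1/2)) powr real m" by (simp add: powr_powr)
  also have "\<dots> = sqrt 2 ^ m" by (simp add: powr_half_sqrt powr_realpow)
  finally show ?thesis .
qed

lemma nu_eq:
  assumes h: "0 < h" "1/2 < 2 ^ n * h" "2 ^ n * h \<le> 1"
  shows "fs_nu h = int n"
proof -
  have l: "log 2 (2 ^ n * h) = real n + log 2 h"
    using h by (simp add: log_mult log_nat_power)
  have "log 2 (2 ^ n * h) \<le> 0" using h by simp
  moreover have "log 2 (1/2) < log 2 (2 ^ n * h)" using h by simp
  moreover have "log 2 (1/2::real) = -1" by (simp add: log_divide)
  ultimately have "real n \<le> - log 2 h" "- log 2 h < real n + 1" using l by linarith+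
  then show ?thesis unfolding fs_nu_def by (simp add: floor_eq_iff)
qed

lemma omega_eq:
  assumes h: "0 < h" "1/2 < 2 ^ n * h" "2 ^ n * h \<le> 1"
  shows "fs_omega h = (1 + qq) * h * sqrt 2 ^ n + BB * qq ^ n"
proof -
  have "fs_nu h = int n" by (rule nu_eq[OF h])
  moreover have "1 / 3 * (sqrt 8 + 2) = BB" unfolding BB_def sqrt8 by simp
  moreover have "1 + 1 / sqrt 2 = 1 + qq" by (simp add: qq_def)
  ultimately show ?thesis unfolding fs_omega_def using powr_s2[of n] powr_qq[of n]
    by (simp add: mult.commute)
qed

lemma omega_pos: "0 < h \<Longrightarrow> h \<le> 1 \<Longrightarrow> 0 < fs_omega h"
proof -
  assume h: "0 < h" "h \<le> 1"
  obtain n where n: "1/2 < 2 ^ n * h" "2 ^ n * h \<le> 1" using ex_scale[OF h] by auto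
  have "0 < sqrt (2::real)" by simp
  then have "0 < BB" unfolding BB_def by (intro divide_pos_pos add_pos_pos) auto
  then have "0 < BB * qq ^ n" using qq_pos by simp
  moreover have "0 \<le> (1 + qq) * h * sqrt 2 ^ n" using qq_pos h by simp
  ultimately show ?thesis using omega_eq[OF h(1) n] by simp
qed

lemma sums_PP: "(\<lambda>j. qq ^ j * phi (2 ^ j * w)) sums PP w"
  unfolding PP_def by (rule summable_sums[OF summable_P])

lemma sums_tail: "(\<lambda>j. qq ^ (j + n) * phi (2 ^ (j + n) * w)) sums (qq ^ n * PP (2 ^ n * w))"
proof -
  have "(\<lambda>j. qq ^ n * (qq ^ j * phi (2 ^ j * (2 ^ n * w)))) sums (qq ^ n * PP (2 ^ n * w))"
    by (rule sums_mult[OF sums_PP])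
  moreover have "qq ^ n * (qq ^ j * phi (2 ^ j * (2 ^ n * w))) = qq ^ (j + n) * phi (2 ^ (j + n) * w)" for j
    by (simp add: power_add mult.assoc mult.left_commute)
  ultimately show ?thesis by simp
qed

lemma UB_X:
  assumes th: "pm1 \<theta>" and h: "0 < h" "h \<le> 1" and t: "0 \<le> t" "t + h \<le> 1"
  shows "\<bar>fs_series \<theta> (t + h) - fs_series \<theta> t\<bar> \<le> sqrt 2 * fs_omega h"
proof -
  obtain n where n: "1/2 < 2 ^ n * h" "2 ^ n * h \<le> 1" using ex_scale[OF h] by auto
  define T where "T = sqrt (2::real) ^ n"
  define d where "d m = fs_level \<theta> m (t + h) - fs_level \<theta> m t" for m
  have t1: "t \<le> 1" "0 \<le> t + h" using t h by auto
  have sd: "summable d" unfolding d_def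
    by (intro summable_diff summable_level[OF th]) (use t t1 in auto)
  have eq: "fs_series \<theta> (t + h) - fs_series \<theta> t = (\<Sum>m. d m)"
    unfolding fs_series_def d_def
    by (intro suminf_diff summable_level[OF th]) (use t t1 in auto)
  have split: "(\<Sum>m. d m) = (\<Sum>j. d (j + n)) + (\<Sum>m<n. d m)"
    by (rule suminf_split_initial_segment[OF sd])
  have dbig: "\<bar>d m\<bar> \<le> qq ^ m * (phi (2 ^ m * (t + h)) + phi (2 ^ m * t))" for m
    unfolding d_def by (rule level_diff_big[OF th]) (use t h in auto)
  define g where "g j = qq ^ (j + n) * phi (2 ^ (j + n) * (t + h)) + qq ^ (j + n) * phi (2 ^ (j + n) * t)" for j
  have gs: "g sums (qq ^ n * PP (2 ^ n * (t + h)) + qq ^ n * PP (2 ^ n * t))"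
    unfolding g_def by (intro sums_add sums_tail)
  have dg: "\<bar>d (j + n)\<bar> \<le> g j" for j using dbig[of "j + n"] unfolding g_def by (simp add: distrib_left)
  have sad: "summable (\<lambda>j. \<bar>d (j + n)\<bar>)"
    by (rule summable_comparison_test[OF _ sums_summable[OF gs]]) (use dg in auto)
  have "\<bar>\<Sum>j. d (j + n)\<bar> \<le> (\<Sum>j. \<bar>d (j + n)\<bar>)" by (rule summable_rabs[OF sad])
  also have "\<dots> \<le> (\<Sum>j. g j)" by (rule suminf_le[OF dg sad sums_summable[OF gs]])
  also have "\<dots> = qq ^ n * PP (2 ^ n * (t + h)) + qq ^ n * PP (2 ^ n * t)" using gs by (rule sums_unique[symmetric])
  also have "\<dots> \<le> qq ^ n * KK + qq ^ n * KK" using qq_pos PP_le_KK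
    by (intro add_mono mult_left_mono) auto
  finally have tail: "\<bar>\<Sum>j. d (j + n)\<bar> \<le> 2 * KK * qq ^ n" by simp
  have "\<bar>\<Sum>m<n. d m\<bar> \<le> (\<Sum>m<n. \<bar>d m\<bar>)" by (rule sum_abs)
  also have "\<dots> \<le> (\<Sum>m<n. qq ^ m * 2 ^ m * h)"
  proof (rule sum_mono)
    fix m assume "m \<in> {..<n}"
    then have "m \<le> n" by simp
    then have "(2::real) ^ m \<le> 2 ^ n" by (rule power_increasing) simp
    then have "2 ^ m * h \<le> 2 ^ n * h" using h by (intro mult_right_mono) auto
    then have "2 ^ m * h \<le> 1" using n by simp
    then show "\<bar>d m\<bar> \<le> qq ^ m * 2 ^ m * h"
      unfolding d_def using level_diff_small[OF th t(1) _ t(2), of m] h by (simp add: mult.assoc)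
  qed
  also have "\<dots> = (T - 1) * (sqrt 2 + 1) * h"
    unfolding T_def geo_qq[symmetric] by (simp add: sum_distrib_right)
  finally have head: "\<bar>\<Sum>m<n. d m\<bar> \<le> (T - 1) * (sqrt 2 + 1) * h" .
  have "\<bar>fs_series \<theta> (t + h) - fs_series \<theta> t\<bar> \<le> (T - 1) * (sqrt 2 + 1) * h + 2 * KK * qq ^ n"
    using eq split head tail by linarith
  also have "\<dots> \<le> T * (sqrt 2 + 1) * h + 2 * KK * qq ^ n"
    using h by (simp add: algebra_simps)
  also have "\<dots> = sqrt 2 * fs_omega h"
  proof -
    have e1: "sqrt 2 * (1 + qq) = sqrt 2 + 1" using qq_s2 by (simp add: algebra_simps)
    have e2: "sqrt 2 * BB = 2 * KK" unfolding BB_def KK_def by (simp add: algebra_simps)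
    have "sqrt 2 * ((1 + qq) * h * T + BB * qq ^ n) = (sqrt 2 * (1 + qq)) * h * T + (sqrt 2 * BB) * qq ^ n"
      by algebra
    also have "\<dots> = T * (sqrt 2 + 1) * h + 2 * KK * qq ^ n" unfolding e1 e2 by algebra
    finally show ?thesis unfolding omega_eq[OF h(1) n] T_def by simp
  qed
  finally show ?thesis .
qed

lemma UB_hat:
  assumes h: "0 < h" "h \<le> 1" and t: "0 \<le> t" "t + h \<le> 1"
  shows "\<bar>x_hat (t + h) - x_hat t\<bar> \<le> fs_omega h"
proof -
  obtain n where n: "1/2 < 2 ^ n * h" "2 ^ n * h \<le> 1" using ex_scale[OF h] by auto
  define T where "T = sqrt (2::real) ^ n"
  have xe: "x_hat (t + h) = PP (t + h)" "x_hat t = PP t" using t h by (auto intro!: x_hat_eq)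
  have sp: "\<bar>PP (t + h) - PP t\<bar> \<le> (\<Sum>j<n. qq ^ j * (2 ^ j * \<bar>h\<bar>)) + qq ^ n * \<bar>PP (2 ^ n * t + 2 ^ n * h) - PP (2 ^ n * t)\<bar>"
    by (rule PP_inc_split)
  have A: "(\<Sum>j<n. qq ^ j * (2 ^ j * \<bar>h\<bar>)) = (T - 1) * (sqrt 2 + 1) * h"
    unfolding T_def geo_qq[symmetric] using h by (simp add: sum_distrib_right mult.assoc)
  have "\<bar>PP (2 ^ n * t + 2 ^ n * h) - PP (2 ^ n * t)\<bar> \<le> BB - qq * (2 ^ n * h)"
    using n by (intro M_bound) auto
  then have "qq ^ n * \<bar>PP (2 ^ n * t + 2 ^ n * h) - PP (2 ^ n * t)\<bar> \<le> qq ^ n * (BB - qq * (2 ^ n * h))"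
    using qq_pos by (intro mult_left_mono) auto
  also have "\<dots> = BB * qq ^ n - qq * T * h"
  proof -
    have "qq ^ n * (2::real) ^ n = T" using pow_facts[of n] T_def by (simp add: mult.assoc[symmetric])
    then show ?thesis by (simp add: algebra_simps)
  qed
  finally have Q: "qq ^ n * \<bar>PP (2 ^ n * t + 2 ^ n * h) - PP (2 ^ n * t)\<bar> \<le> BB * qq ^ n - qq * T * h" .
  have "\<bar>PP (t + h) - PP t\<bar> \<le> (T - 1) * (sqrt 2 + 1) * h + (BB * qq ^ n - qq * T * h)"
    using sp A Q by linarith
  also have "\<dots> = (1 + qq) * h * T + BB * qq ^ n - (sqrt 2 + 1) * h"
  proof -
    have "sqrt 2 = 2 * qq" by (simp add: qq_alt)
    then show ?thesis by (simp add: algebra_simps)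
  qed
  also have "\<dots> \<le> (1 + qq) * h * T + BB * qq ^ n" using h by simp
  finally show ?thesis using xe omega_eq[OF h(1) n] T_def by simp
qed

definition DD :: real where "DD = 2/3 * (sqrt 2 + 1) + KK"

lemma DD_pos: "0 < DD"
  unfolding DD_def KK_def by (intro add_pos_pos divide_pos_pos mult_pos_pos) auto

lemma DD_alt: "(1 + qq) * (2/3) + BB = DD"
  unfolding DD_def KK_def BB_def qq_alt by (simp add: algebra_simps)

lemma half_pow: "(1/2::real) ^ n = qq ^ n * qq ^ n"
  by (simp add: power_mult_distrib[symmetric] qq_sq)

lemma PP_zero: "PP 0 = 0"
  unfolding PP_def using phi_small[of 0] by simp

lemma PP_hn: "PP (2/3 * (1/2) ^ n) = qq ^ n * DD - (sqrt 2 + 1) * (2/3 * (1/2) ^ n)"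
proof -
  define h where "h = 2/3 * (1/2::real) ^ n"
  define T where "T = sqrt (2::real) ^ n"
  have p2: "(2::real) ^ n * (1/2) ^ n = 1" by (simp add: power_mult_distrib[symmetric])
  have h2: "2 ^ n * h = 2/3" unfolding h_def using p2 by (simp add: algebra_simps)
  have ph: "phi (2 ^ j * h) = 2 ^ j * h" if "j < n" for j
  proof (rule phi_small)
    show "0 \<le> 2 ^ j * h" unfolding h_def by simp
    have "(2::real) ^ (j + 1) \<le> 2 ^ n" using that by (intro power_increasing) auto
    then have "2 ^ (j + 1) * h \<le> 2 ^ n * h" unfolding h_def by (intro mult_right_mono) auto
    then have "2 * (2 ^ j * h) \<le> 2/3" using h2 by (simp add: mult.assoc)
    then show "2 ^ j * h \<le> 1/2" by linarith
  qed
  have "PP h = (\<Sum>j<n. qq ^ j * phi (2 ^ j * h)) + qq ^ n * PP (2 ^ n * h)" by (rule PP_split)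
  also have "(\<Sum>j<n. qq ^ j * phi (2 ^ j * h)) = (\<Sum>j<n. qq ^ j * 2 ^ j) * h"
    using ph by (simp add: sum_distrib_right mult.assoc)
  also have "\<dots> = (T - 1) * (sqrt 2 + 1) * h" unfolding geo_qq T_def by simp
  also have "PP (2 ^ n * h) = KK" unfolding h2 by (rule PP_third(1))
  finally have e: "PP h = (T - 1) * (sqrt 2 + 1) * h + qq ^ n * KK" .
  have Th: "T * h = 2/3 * qq ^ n"
  proof -
    have "T * h = 2/3 * ((qq ^ n * T) * qq ^ n)" unfolding h_def half_pow by (simp add: algebra_simps)
    then show ?thesis using pow_facts(1)[of n] T_def by (simp add: mult.commute)
  qed
  have "PP h = (sqrt 2 + 1) * (T * h) - (sqrt 2 + 1) * h + qq ^ n * KK" using e by (simp add: algebra_simps)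
  also have "\<dots> = qq ^ n * DD - (sqrt 2 + 1) * h" unfolding Th DD_def by (simp add: algebra_simps)
  finally show ?thesis unfolding h_def .
qed

lemma omega_hn: "fs_omega (2/3 * (1/2) ^ n) = qq ^ n * DD"
proof -
  define h where "h = 2/3 * (1/2::real) ^ n"
  have p2: "(2::real) ^ n * (1/2) ^ n = 1" by (simp add: power_mult_distrib[symmetric])
  have h2: "2 ^ n * h = 2/3" unfolding h_def using p2 by (simp add: algebra_simps)
  have "fs_omega h = (1 + qq) * h * sqrt 2 ^ n + BB * qq ^ n"
    by (rule omega_eq) (use h2 in \<open>auto simp: h_def\<close>)
  also have "h * sqrt 2 ^ n = 2/3 * qq ^ n"
  proof -
    have "h * sqrt 2 ^ n = 2/3 * ((qq ^ n * sqrt 2 ^ n) * qq ^ n)" unfolding h_def half_pow by (simp add: algebra_simps)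
    then show ?thesis using pow_facts(1)[of n] by simp
  qed
  then have "(1 + qq) * h * sqrt 2 ^ n = (1 + qq) * (2/3) * qq ^ n" by (simp add: mult.assoc)
  finally show ?thesis unfolding h_def DD_alt[symmetric] by (simp add: algebra_simps)
qed

lemma hn_div: "(2/3 * (1/2) ^ n) / (qq ^ n * DD) = 2/3 * qq ^ n / DD"
  using qq_pos DD_pos unfolding half_pow by (simp add: field_simps)

lemma ratio_hat: "\<bar>x_hat (0 + 2/3 * (1/2) ^ n) - x_hat 0\<bar> / fs_omega (2/3 * (1/2) ^ n)
     = 1 - (sqrt 2 + 1) * (2/3 * qq ^ n / DD)"
proof -
  define h where "h = 2/3 * (1/2::real) ^ n"
  have "(1/2::real) ^ n \<le> 1" by (rule power_le_one) auto
  then have hle: "h \<le> 1" unfolding h_def by simp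
  have x0: "x_hat 0 = 0" using x_hat_eq[of 0] PP_zero by simp
  have xh: "x_hat h = PP h" using hle by (intro x_hat_eq) (auto simp: h_def)
  have nn: "0 \<le> PP h" by (rule PP_nonneg)
  have "\<bar>x_hat (0 + h) - x_hat 0\<bar> / fs_omega h = (qq ^ n * DD - (sqrt 2 + 1) * h) / (qq ^ n * DD)"
    using x0 xh nn PP_hn[of n] omega_hn[of n] unfolding h_def by simp
  also have "\<dots> = 1 - (sqrt 2 + 1) * (h / (qq ^ n * DD))"
    using qq_pos DD_pos by (simp add: field_simps)
  finally show ?thesis unfolding h_def hn_div .
qed

lemma x_star_left: "0 \<le> t \<Longrightarrow> t \<le> 1/2 \<Longrightarrow> x_star t = PP t"
  unfolding x_star_def2 fs_series_def PP_def by (simp add: star_level_left)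

lemma x_star_right:
  assumes "1/2 \<le> t" "t \<le> 1"
  shows "x_star t = 2 * phi t - PP t"
proof -
  have sl: "summable (\<lambda>m. fs_level th_star m t)"
    using assms by (intro summable_level pm1_star) auto
  have "(\<Sum>m. fs_level th_star (Suc m) t) = x_star t - fs_level th_star 0 t"
    unfolding x_star_def2 fs_series_def by (rule suminf_split_head[OF sl])
  moreover have "fs_level th_star 0 t = phi t"
  proof -
    have "fs_level th_star 0 t = fs_e00 t" unfolding fs_level_eq th_star_def by simp
    then show ?thesis using assms phi_01 by simp
  qed
  moreover have "(\<Sum>m. fs_level th_star (Suc m) t) = - (PP t - phi t)"
  proof -
    have hd: "(\<Sum>m. qq ^ Suc m * phi (2 ^ Suc m * t)) = PP t - qq ^ 0 * phi (2 ^ 0 * t)"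
      unfolding PP_def by (rule suminf_split_head[OF summable_P])
    have S: "summable (\<lambda>m. qq ^ Suc m * phi (2 ^ Suc m * t))"
      using summable_P[of t] by (simp only: summable_Suc_iff[of "\<lambda>m. qq ^ m * phi (2 ^ m * t)"])
    have "(\<Sum>m. fs_level th_star (Suc m) t) = (\<Sum>m. - (qq ^ Suc m * phi (2 ^ Suc m * t)))"
      using assms by (intro suminf_cong star_level_right) auto
    also have "\<dots> = - (\<Sum>m. qq ^ Suc m * phi (2 ^ Suc m * t))" by (rule suminf_minus[OF S])
    also have "\<dots> = - (PP t - phi t)" using hd by simp
    finally show ?thesis .
  qed
  ultimately show ?thesis by simp
qed

lemma star_inc:
  assumes a: "0 \<le> a" "a \<le> 1/2"
  shows "\<bar>x_star ((1/2 - a) + 2 * a) - x_star (1/2 - a)\<bar> = 2 * PP a - 2 * a"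
proof -
  have l: "x_star (1/2 - a) = PP (1/2 - a)" using a by (intro x_star_left) auto
  have r: "x_star (1/2 + a) = 2 * phi (1/2 + a) - PP (1/2 + a)" using a by (intro x_star_right) auto
  have p1: "phi (1/2 + a) = 1/2 - a"
  proof -
    have "phi (1/2 + a) = phi (-(1/2 - a) + of_int 1)" by simp
    also have "\<dots> = phi (1/2 - a)" by (simp only: phi_shift phi_minus)
    also have "\<dots> = 1/2 - a" using a by (intro phi_small) auto
    finally show ?thesis .
  qed
  have P1: "PP (1/2 + a) = PP (1/2 - a)"
  proof -
    have "PP (1/2 + a) = PP (-(1/2 - a) + of_int 1)" by simp
    also have "\<dots> = PP (1/2 - a)" by (simp only: PP_shift PP_minus)
    finally show ?thesis .
  qed
  have P2: "PP (1 - 2 * a) = PP (2 * a)"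
  proof -
    have "PP (1 - 2 * a) = PP (-(2 * a) + of_int 1)" by simp
    also have "\<dots> = PP (2 * a)" by (simp only: PP_shift PP_minus)
    finally show ?thesis .
  qed
  have "PP (1/2 - a) = phi (1/2 - a) + qq * PP (2 * (1/2 - a))" by (rule PP_rec)
  also have "2 * (1/2 - a) = 1 - 2 * a" by simp
  also have "phi (1/2 - a) = 1/2 - a" using a by (intro phi_small) auto
  finally have A: "PP (1/2 - a) = 1/2 - a + qq * PP (2 * a)" using P2 by simp
  have B: "PP a = a + qq * PP (2 * a)" using PP_rec[of a] phi_small[of a] a by simp
  have nn: "a \<le> PP a" using B qq_pos PP_nonneg[of "2 * a"] by simp
  have "x_star ((1/2 - a) + 2 * a) - x_star (1/2 - a) = - (2 * PP a - 2 * a)"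
    using l r p1 P1 A B by (simp add: algebra_simps)
  then show ?thesis using nn by simp
qed

lemma ratio_star:
  fixes n :: nat
  defines "a \<equiv> 1/3 * (1/2::real) ^ n"
  shows "\<bar>x_star ((1/2 - a) + 2 * a) - x_star (1/2 - a)\<bar> / fs_omega (2 * a)
     = sqrt 2 - (2 * sqrt 2 + 4) * (1/3 * qq ^ n / DD)"
proof -
  have "(1/2::real) ^ n \<le> 1" by (rule power_le_one) auto
  then have a0: "0 \<le> a" "a \<le> 1/2" unfolding a_def by auto
  have aS: "a = 2/3 * (1/2) ^ Suc n" unfolding a_def by simp
  have a2: "2 * a = 2/3 * (1/2) ^ n" unfolding a_def by simp
  have inc: "\<bar>x_star ((1/2 - a) + 2 * a) - x_star (1/2 - a)\<bar> = 2 * PP a - 2 * a" by (rule star_inc[OF a0])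
  have "PP a = qq ^ Suc n * DD - (sqrt 2 + 1) * a" unfolding aS by (rule PP_hn)
  then have "2 * PP a - 2 * a = (2 * qq) * (qq ^ n * DD) - (2 * sqrt 2 + 4) * a" by (simp add: algebra_simps)
  also have "2 * qq = sqrt 2" by (simp add: qq_alt)
  finally have e: "2 * PP a - 2 * a = sqrt 2 * (qq ^ n * DD) - (2 * sqrt 2 + 4) * a" .
  have ad: "a / (qq ^ n * DD) = 1/3 * qq ^ n / DD"
    using qq_pos DD_pos unfolding a_def half_pow by (simp add: field_simps)
  have "\<bar>x_star ((1/2 - a) + 2 * a) - x_star (1/2 - a)\<bar> / fs_omega (2 * a)
      = (sqrt 2 * (qq ^ n * DD) - (2 * sqrt 2 + 4) * a) / (qq ^ n * DD)"
    unfolding inc e unfolding a2 omega_hn ..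
  also have "\<dots> = sqrt 2 - (2 * sqrt 2 + 4) * (a / (qq ^ n * DD))"
    using qq_pos DD_pos by (simp add: field_simps)
  also have "\<dots> = sqrt 2 - (2 * sqrt 2 + 4) * (1/3 * qq ^ n / DD)" unfolding ad ..
  finally show ?thesis .
qed

lemma mod_le:
  assumes h: "0 < h" "h \<le> 1" and b: "\<And>t. 0 \<le> t \<Longrightarrow> t \<le> 1 - h \<Longrightarrow> \<bar>x (t + h) - x t\<bar> \<le> C * fs_omega h"
  shows "fs_mod x h \<le> ereal C"
  unfolding fs_mod_def
proof (rule SUP_least)
  fix t assume "t \<in> {0..1 - h}"
  then have "\<bar>x (t + h) - x t\<bar> \<le> C * fs_omega h" using b by auto
  then have "\<bar>x (t + h) - x t\<bar> / fs_omega h \<le> C" using omega_pos[OF h] by (simp add: divide_le_eq)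
  then show "ereal (\<bar>x (t + h) - x t\<bar> / fs_omega h) \<le> ereal C" by simp
qed

lemma mod_ge: "0 \<le> t \<Longrightarrow> t \<le> 1 - h \<Longrightarrow> ereal (\<bar>x (t + h) - x t\<bar> / fs_omega h) \<le> fs_mod x h"
  unfolding fs_mod_def by (rule SUP_upper) auto

lemma LS_le:
  assumes "\<And>h. 0 < h \<Longrightarrow> h \<le> 1 \<Longrightarrow> f h \<le> ereal C"
  shows "Limsup (at_right (0::real)) f \<le> ereal C"
proof (rule Limsup_bounded)
  show "eventually (\<lambda>h. f h \<le> ereal C) (at_right 0)"
    unfolding eventually_at_right_field using assms by (intro exI[of _ 1]) auto
qed

lemma LS_ge:
  fixes hs a :: "nat \<Rightarrow> real"
  assumes pos: "\<And>n. 0 < hs n" and lim: "hs \<longlonglongrightarrow> 0"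
    and le: "\<And>n. ereal (a n) \<le> f (hs n)" and al: "a \<longlonglongrightarrow> L"
  shows "ereal L \<le> Limsup (at_right (0::real)) f"
  unfolding Limsup_def
proof (rule INF_greatest)
  fix P :: "real \<Rightarrow> bool" assume "P \<in> {P. eventually P (at_right 0)}"
  then have ev: "eventually P (at_right (0::real))" by simp
  obtain b where b0: "0 < b" and b1: "\<forall>y>0. y < b \<longrightarrow> P y"
    using ev[unfolded eventually_at_right_field] by blast
  have b: "0 < b" "\<And>y. 0 < y \<Longrightarrow> y < b \<Longrightarrow> P y" using b0 b1 by auto
  have "eventually (\<lambda>n. hs n < b) sequentially" using lim b(1) by (rule order_tendstoD(2))
  then have "eventually (\<lambda>n. ereal (a n) \<le> Sup (f ` Collect P)) sequentially"
  proof (rule eventually_mono)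
    fix n assume "hs n < b"
    then have "P (hs n)" using b pos by auto
    then have "f (hs n) \<le> Sup (f ` Collect P)" by (intro SUP_upper) auto
    then show "ereal (a n) \<le> Sup (f ` Collect P)" using le order.trans by blast
  qed
  then have "\<exists>N. \<forall>n\<ge>N. ereal (a n) \<le> Sup (f ` Collect P)" by (simp add: eventually_sequentially)
  moreover have "(\<lambda>n. ereal (a n)) \<longlonglongrightarrow> ereal L" using al by simp
  ultimately show "ereal L \<le> Sup (f ` Collect P)" by (intro LIMSEQ_le_const2) auto
qed

lemma qq_lim: "(\<lambda>n. C * (D0 * qq ^ n / DD)) \<longlonglongrightarrow> 0"
proof -
  have q0: "(\<lambda>n. qq ^ n) \<longlonglongrightarrow> 0" by (rule LIMSEQ_power_zero) (use qq_pos qq_lt1 in simp)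
  have "(\<lambda>n. C * (D0 * qq ^ n / DD)) \<longlonglongrightarrow> C * (D0 * 0 / DD)"
    by (intro tendsto_mult tendsto_const tendsto_divide q0) (use DD_pos in simp)
  then show ?thesis by simp
qed

lemma half_lim: "(\<lambda>n. C * (1/2::real) ^ n) \<longlonglongrightarrow> 0"
proof -
  have "(\<lambda>n. (1/2::real) ^ n) \<longlonglongrightarrow> 0" by (rule LIMSEQ_power_zero) simp
  then have "(\<lambda>n. C * (1/2::real) ^ n) \<longlonglongrightarrow> C * 0" by (intro tendsto_mult tendsto_const)
  then show ?thesis by simp
qed

lemma part_a: "Limsup (at_right 0) (fs_mod x_hat) = 1"
proof (rule antisym)
  show "Limsup (at_right 0) (fs_mod x_hat) \<le> 1"
    unfolding one_ereal_def
    by (rule LS_le, rule mod_le) (use UB_hat in auto)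
  have "ereal 1 \<le> Limsup (at_right 0) (fs_mod x_hat)"
  proof (rule LS_ge[where hs = "\<lambda>n. 2/3 * (1/2) ^ n" and a = "\<lambda>n. 1 - (sqrt 2 + 1) * (2/3 * qq ^ n / DD)"])
    show "0 < 2/3 * (1/2::real) ^ n" for n by simp
    show "(\<lambda>n. 2/3 * (1/2::real) ^ n) \<longlonglongrightarrow> 0" by (rule half_lim)
    show "ereal (1 - (sqrt 2 + 1) * (2/3 * qq ^ n / DD)) \<le> fs_mod x_hat (2/3 * (1/2) ^ n)" for n
    proof -
      have "(1/2::real) ^ n \<le> 1" by (rule power_le_one) auto
      then have "0 \<le> 1 - 2/3 * (1/2::real) ^ n" by simp
      then show ?thesis using mod_ge[of 0 "2/3 * (1/2) ^ n" x_hat] ratio_hat[of n] by simp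
    qed
    have "(\<lambda>n. 1 - (sqrt 2 + 1) * (2/3 * qq ^ n / DD)) \<longlonglongrightarrow> 1 - 0"
    proof (intro tendsto_diff tendsto_const)
      show "(\<lambda>n. (sqrt 2 + 1) * (2/3 * qq ^ n / DD)) \<longlonglongrightarrow> 0"
        by (rule qq_lim)
    qed
    then show "(\<lambda>n. 1 - (sqrt 2 + 1) * (2/3 * qq ^ n / DD)) \<longlonglongrightarrow> 1" by simp
  qed
  then show "1 \<le> Limsup (at_right 0) (fs_mod x_hat)" by (simp add: one_ereal_def)
qed

lemma x_star_X: "x_star \<in> fs_X" unfolding x_star_def2 by (rule pm1_fs_X[OF pm1_star])

lemma star_lower:
  assumes "\<And>h. 0 < h \<Longrightarrow> h \<le> 1 \<Longrightarrow> fs_mod x_star h \<le> f h"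
  shows "ereal (sqrt 2) \<le> Limsup (at_right 0) f"
proof (rule LS_ge[where hs = "\<lambda>n. 2 * (1/3 * (1/2) ^ n)" and a = "\<lambda>n. sqrt 2 - (2 * sqrt 2 + 4) * (1/3 * qq ^ n / DD)"])
  show "0 < 2 * (1/3 * (1/2::real) ^ n)" for n by simp
  show "(\<lambda>n. 2 * (1/3 * (1/2::real) ^ n)) \<longlonglongrightarrow> 0" using half_lim[of "2/3"] by (simp add: mult.assoc)
  show "ereal (sqrt 2 - (2 * sqrt 2 + 4) * (1/3 * qq ^ n / DD)) \<le> f (2 * (1/3 * (1/2) ^ n))" for n
  proof -
    define a where "a = 1/3 * (1/2::real) ^ n"
    have "(1/2::real) ^ n \<le> 1" by (rule power_le_one) auto
    then have a0: "0 \<le> 1/2 - a" "1/2 - a \<le> 1 - 2 * a" "0 < 2 * a" "2 * a \<le> 1" unfolding a_def by auto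
    have "ereal (sqrt 2 - (2 * sqrt 2 + 4) * (1/3 * qq ^ n / DD)) \<le> fs_mod x_star (2 * a)"
      using mod_ge[OF a0(1,2), of x_star] ratio_star[of n] unfolding a_def by simp
    also have "\<dots> \<le> f (2 * a)" using assms a0 by auto
    finally show ?thesis unfolding a_def .
  qed
  have "(\<lambda>n. sqrt 2 - (2 * sqrt 2 + 4) * (1/3 * qq ^ n / DD)) \<longlonglongrightarrow> sqrt 2 - 0"
  proof (intro tendsto_diff tendsto_const)
    show "(\<lambda>n. (2 * sqrt 2 + 4) * (1/3 * qq ^ n / DD)) \<longlonglongrightarrow> 0"
      by (rule qq_lim)
  qed
  then show "(\<lambda>n. sqrt 2 - (2 * sqrt 2 + 4) * (1/3 * qq ^ n / DD)) \<longlonglongrightarrow> sqrt 2" by simp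
qed

lemma part_b: "Limsup (at_right 0) (\<lambda>h. SUP x\<in>fs_X. fs_mod x h) = ereal (sqrt 2)"
proof (rule antisym)
  show "Limsup (at_right 0) (\<lambda>h. SUP x\<in>fs_X. fs_mod x h) \<le> ereal (sqrt 2)"
  proof (rule LS_le, rule SUP_least)
    fix h x assume h: "0 < (h::real)" "h \<le> 1" and x: "x \<in> fs_X"
    obtain \<theta> where th: "pm1 \<theta>" "x = fs_series \<theta>" using fs_X_pm1[OF x] by blast
    show "fs_mod x h \<le> ereal (sqrt 2)"
      by (rule mod_le[OF h]) (use UB_X[OF th(1) h] th(2) in \<open>auto simp: mult.commute\<close>)
  qed
  show "ereal (sqrt 2) \<le> Limsup (at_right 0) (\<lambda>h. SUP x\<in>fs_X. fs_mod x h)"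
    by (rule star_lower) (intro SUP_upper x_star_X)
qed

lemma part_c: "Limsup (at_right 0) (fs_mod x_star) = ereal (sqrt 2)"
proof (rule antisym)
  show "Limsup (at_right 0) (fs_mod x_star) \<le> ereal (sqrt 2)"
  proof (rule LS_le)
    fix h assume h: "0 < (h::real)" "h \<le> 1"
    show "fs_mod x_star h \<le> ereal (sqrt 2)"
      by (rule mod_le[OF h]) (use UB_X[OF pm1_star h] x_star_def2 in \<open>auto simp: mult.commute\<close>)
  qed
  show "ereal (sqrt 2) \<le> Limsup (at_right 0) (fs_mod x_star)"
    by (rule star_lower) simp
qed

theorem theorem2p3:
  shows "Limsup (at_right 0) (fs_mod x_hat) = 1
       \<and> Limsup (at_right 0) (\<lambda>h. SUP x\<in>fs_X. fs_mod x h) = ereal (sqrt 2)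
       \<and> Limsup (at_right 0) (fs_mod x_star) = ereal (sqrt 2)"
  using part_a part_b part_c by blast


end
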